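(* Let $(Y,d)$ be a length space and $y_0\in Y$. Equip $Y\times\mathbb{R}$ with the product metric $\big((y,t),(y',t')\big)\mapsto\sqrt{d(y,y')^2+|t-t'|^2}$, and let $B_{(y_0,0)}(s)$ denote the open ball of radius $s$ about $(y_0,0)$ in this metric. If $L>0$ and $0<r<\min\{\tfrac12\mathrm{Diam}(Y,d),\,L\}$, then $B_{(y_0,0)}(L)-B_{(y_0,0)}(r)$ is path connected.
   Context: A metric space $(Y,d)$ is called a length space if for all $x,y\in Y$ there is a path $\gamma_0$ from $x$ to $y$ whose length (the supremum over partitions $a=t_0<\dots<t_n=b$ of $\sum_i d(\gamma(t_i),\gamma(t_{i+1}))$) equals $d(x,y)<\infty$. $\mathrm{Diam}(Y,d)$ may be $+\infty$. *)

theory Defs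
  imports "HOL-Analysis.Analysis" "HOL-Library.Extended_Real"
begin

definition curve_length :: "(real \<Rightarrow> 'a::metric_space) \<Rightarrow> real \<Rightarrow> real \<Rightarrow> ereal" where
  "curve_length \<gamma> a b =
     (SUP p \<in> {(n, t). 0 < n \<and> t 0 = a \<and> t n = b \<and> (\<forall>i<n. t i < t (Suc i))}.
        ereal (\<Sum>i<fst p. dist (\<gamma> (snd p i)) (\<gamma> (snd p (Suc i)))))"

definition length_space :: "'a::metric_space set \<Rightarrow> bool" where
  "length_space Y \<longleftrightarrow>
     (\<forall>x\<in>Y. \<forall>y\<in>Y. \<exists>a b (\<gamma>::real \<Rightarrow> 'a). a < b \<and> continuous_on {a..b} \<gamma> \<and>
        \<gamma> ` {a..b} \<subseteq> Y \<and> \<gamma> a = x \<and> \<gamma> b = y \<and> curve_length \<gamma> a b = ereal (dist x y))"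

definition Diam :: "'a::metric_space set \<Rightarrow> ereal" where
  "Diam Y = (SUP p \<in> Y \<times> Y. ereal (dist (fst p) (snd p)))"

end

theory Submission
  imports Defs
begin

lemma geodesic:
  fixes x y :: "'a::metric_space"
  assumes "length_space (UNIV :: 'a set)"
  obtains a b :: real and \<gamma> :: "real \<Rightarrow> 'a" where "a < b" "continuous_on {a..b} \<gamma>" "\<gamma> a = x" "\<gamma> b = y"
    "\<And>s. s \<in> {a..b} \<Longrightarrow> dist x (\<gamma> s) + dist (\<gamma> s) y \<le> dist x y"
proof -
  obtain a b and \<gamma> :: "real \<Rightarrow> 'a" where ab: "a < b" "continuous_on {a..b} \<gamma>"
      "\<gamma> a = x" "\<gamma> b = y" and len: "curve_length \<gamma> a b = ereal (dist x y)"
    using assms unfolding length_space_def by blast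
  have "dist x (\<gamma> s) + dist (\<gamma> s) y \<le> dist x y" if s: "s \<in> {a..b}" for s
  proof (cases "s = a \<or> s = b")
    case True then show ?thesis using ab by auto
  next
    case False
    with s have as: "a < s" "s < b" by auto
    define t where "t = (\<lambda>i::nat. if i = 0 then a else if i = 1 then s else b)"
    have mem: "(2::nat, t) \<in> {(n, t). 0 < n \<and> t 0 = a \<and> t n = b \<and> (\<forall>i<n. t i < t (Suc i))}"
      using as by (auto simp: t_def less_2_cases_iff)
    have "ereal (\<Sum>i<fst (2::nat, t). dist (\<gamma> (snd (2::nat, t) i)) (\<gamma> (snd (2::nat, t) (Suc i))))
          \<le> curve_length \<gamma> a b"
      unfolding curve_length_def by (rule SUP_upper[OF mem])
    moreover have "(\<Sum>i<fst (2::nat, t). dist (\<gamma> (snd (2::nat, t) i)) (\<gamma> (snd (2::nat, t) (Suc i))))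
        = dist x (\<gamma> s) + dist (\<gamma> s) y"
      using ab by (simp add: t_def numeral_2_eq_2)
    ultimately show ?thesis using len by simp
  qed
  then show ?thesis using ab by (intro that[of a b \<gamma>]) auto
qed

lemma geodesic_ex:
  fixes x y :: "'a::metric_space"
  assumes "length_space (UNIV :: 'a set)"
  shows "\<exists>a b (\<gamma>::real \<Rightarrow> 'a). a < b \<and> continuous_on {a..b} \<gamma> \<and> \<gamma> a = x \<and> \<gamma> b = y \<and>
    (\<forall>s\<in>{a..b}. dist x (\<gamma> s) + dist (\<gamma> s) y \<le> dist x y)"
  by (rule geodesic[OF assms, of x y]) blast

lemma path_component_curve:
  fixes a b :: real and f :: "real \<Rightarrow> 'a::topological_space"
  assumes "a \<le> b" "continuous_on {a..b} f" "f ` {a..b} \<subseteq> S"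
  shows "path_component S (f a) (f b)"
proof -
  define g where "g = (\<lambda>u::real. f (a + u * (b - a)))"
  have m: "a + u * (b - a) \<in> {a..b}" if "u \<in> {0..1}" for u
  proof -
    have "u * (b - a) \<le> 1 * (b - a)" using that assms(1) by (intro mult_right_mono) auto
    moreover have "0 \<le> u * (b - a)" using that assms(1) by auto
    ultimately show ?thesis by auto
  qed
  have "continuous_on {0..1} g"
    unfolding g_def
    by (rule continuous_on_compose2[OF assms(2)]) (auto intro!: continuous_intros m)
  moreover have "path_image g \<subseteq> S" using assms(3) m by (auto simp: path_image_def g_def)
  ultimately show ?thesis unfolding path_component_def path_def pathstart_def pathfinish_def
    by (intro exI[of _ g]) (auto simp: g_def)
qed

lemma to_pole:
  fixes y0 y :: "'a::metric_space" and t \<sigma> r L :: real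
  assumes ls: "length_space (UNIV :: 'a set)"
    and sg: "\<bar>\<sigma>\<bar> = 1" and st: "\<sigma> * t \<ge> 0"
    and z: "(y, t) \<in> ball (y0, 0::real) L - ball (y0, 0) r"
    and r: "0 < r"
  shows "path_component (ball (y0, 0::real) L - ball (y0, 0) r) (y0, \<sigma> * r) (y, t)"
proof -
  let ?S = "ball (y0, 0::real) L - ball (y0, 0) r"
  define \<rho> where "\<rho> = dist y0 y"
  define n where "n = sqrt (\<rho>^2 + t^2)"
  have nd: "dist (y0, 0::real) (y, t) = n"
    by (simp add: dist_Pair_Pair n_def \<rho>_def dist_real_def)
  have rn: "r \<le> n" "n < L" using z nd by auto
  have \<rho>n: "\<rho> \<le> n" unfolding n_def by (rule real_le_rsqrt) simp
  have \<rho>0: "0 \<le> \<rho>" by (simp add: \<rho>_def)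
  have sig2: "\<sigma>^2 = 1" using sg by (metis abs_numeral power2_abs power_one)
  obtain a b :: real and \<gamma> :: "real \<Rightarrow> 'a" where ab: "a < b" "continuous_on {a..b} \<gamma>" "\<gamma> a = y0" "\<gamma> b = y"
    and geo: "\<forall>s\<in>{a..b}. dist y0 (\<gamma> s) + dist (\<gamma> s) y \<le> dist y0 y"
    using geodesic_ex[OF ls, of y0 y] by blast
  have dle: "dist y0 (\<gamma> s) \<le> n" if "s \<in> {a..b}" for s
    using geo[rule_format, OF that] \<rho>n zero_le_dist[of "\<gamma> s" y] unfolding \<rho>_def by linarith
  define f where "f = (\<lambda>s. (\<gamma> s, \<sigma> * sqrt (n^2 - (dist y0 (\<gamma> s))^2)))"
  have fc: "continuous_on {a..b} f"
    unfolding f_def by (intro continuous_intros ab(2))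
  have fS: "f ` {a..b} \<subseteq> ?S"
  proof
    fix p assume "p \<in> f ` {a..b}"
    then obtain s where s: "s \<in> {a..b}" and p: "p = f s" by auto
    have "dist y0 (\<gamma> s)^2 \<le> n^2" using dle[OF s] by (intro power_mono) auto
    then have "dist (y0, 0::real) p = sqrt (dist y0 (\<gamma> s)^2 + \<sigma>^2 * (n^2 - dist y0 (\<gamma> s)^2))"
      by (simp add: p f_def dist_Pair_Pair dist_real_def power_mult_distrib)
    also have "\<dots> = n" using sig2 rn r by simp
    finally show "p \<in> ?S" using rn by simp
  qed
  have fa: "f a = (y0, \<sigma> * n)" using ab rn r by (simp add: f_def)
  have "sqrt (n^2 - \<rho>^2) = \<bar>t\<bar>" by (simp add: n_def)
  moreover have "\<sigma> * \<bar>t\<bar> = t" using sg st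
    by (cases "\<sigma> \<ge> 0"; cases "t \<ge> 0") (auto simp: abs_if mult_less_0_iff zero_le_mult_iff)
  ultimately have fb: "f b = (y, t)" using ab by (simp add: f_def \<rho>_def)
  have p1: "path_component ?S (y0, \<sigma> * n) (y, t)"
    using path_component_curve[OF _ fc fS] ab(1) fa fb by simp
  define g where "g = (\<lambda>s::real. (y0, \<sigma> * s))"
  have gc: "continuous_on {r..n} g" unfolding g_def by (intro continuous_intros)
  have gS: "g ` {r..n} \<subseteq> ?S"
  proof
    fix p assume "p \<in> g ` {r..n}"
    then obtain s where s: "s \<in> {r..n}" and p: "p = g s" by auto
    have "dist (y0, 0::real) p = \<bar>\<sigma>\<bar> * \<bar>s\<bar>"
      by (simp add: p g_def dist_Pair_Pair dist_real_def abs_mult)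
    then show "p \<in> ?S" using s sg rn r by auto
  qed
  have p2: "path_component ?S (y0, \<sigma> * r) (y0, \<sigma> * n)"
    using path_component_curve[OF _ gc gS] rn by (simp add: g_def)
  show ?thesis using path_component_trans[OF p2 p1] .
qed

theorem mainTheorem4:
  fixes y0 :: "'a::metric_space" and L r :: real
  assumes "length_space (UNIV :: 'a set)"
    and "L > 0" and "0 < r"
    and "ereal r < Diam (UNIV :: 'a set) / 2" and "r < L"
  shows "path_connected (ball (y0, 0::real) L - ball (y0, 0) r)"
proof -
  let ?S = "ball (y0, 0::real) L - ball (y0, 0) r"
  have "ereal (2 * r) < Diam (UNIV :: 'a set)"
    using assms(4) by (cases "Diam (UNIV :: 'a set)") auto
  then obtain p where "p \<in> (UNIV :: 'a set) \<times> UNIV" "ereal (2*r) < ereal (dist (fst p) (snd p))"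
    unfolding Diam_def by (auto simp: less_SUP_iff)
  then have "2 * r < dist (fst p) (snd p)" by simp
  moreover have "dist (fst p) (snd p) \<le> dist y0 (fst p) + dist y0 (snd p)"
    by (metis dist_commute dist_triangle)
  ultimately have "r < dist y0 (fst p) \<or> r < dist y0 (snd p)" by linarith
  then obtain y1 where y1: "r < dist y0 y1" by blast
  obtain a b :: real and \<gamma> :: "real \<Rightarrow> 'a" where ab: "a < b" "continuous_on {a..b} \<gamma>" "\<gamma> a = y0" "\<gamma> b = y1"
    using geodesic_ex[OF assms(1), of y0 y1] by blast
  have "continuous_on {a..b} (\<lambda>s. dist y0 (\<gamma> s))" by (intro continuous_intros ab(2))
  then obtain s where "s \<in> {a..b}" "dist y0 (\<gamma> s) = r"
    using IVT'[of "\<lambda>s. dist y0 (\<gamma> s)" a r b] ab y1 assms(3) by auto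
  then have M: "(\<gamma> s, 0) \<in> ?S" using assms(3,5) by (simp add: dist_Pair_Pair)
  have toP: "path_component ?S (y0, r) z" if "z \<in> ?S" for z
  proof (cases "snd z \<ge> 0")
    case True
    then show ?thesis using to_pole[OF assms(1), of 1 "snd z" "fst z" y0 L r] that assms(3) by simp
  next
    case False
    have PM: "path_component ?S (y0, r) (\<gamma> s, 0)"
      using to_pole[OF assms(1), of 1 0 "\<gamma> s" y0 L r] M assms(3) by simp
    have QM: "path_component ?S (y0, -1 * r) (\<gamma> s, 0)"
      using to_pole[OF assms(1), of "-1" 0 "\<gamma> s" y0 L r] M assms(3) by simp
    have Qz: "path_component ?S (y0, -1 * r) z"
      using to_pole[OF assms(1), of "-1" "snd z" "fst z" y0 L r] that assms(3) False by simp
    show ?thesis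
      using path_component_trans[OF PM path_component_trans[OF path_component_sym[OF QM] Qz]] .
  qed
  show ?thesis unfolding path_connected_component
  proof (intro ballI)
    fix x z assume "x \<in> ?S" "z \<in> ?S"
    show "path_component ?S x z"
      using path_component_trans[OF path_component_sym[OF toP[OF \<open>x \<in> ?S\<close>]] toP[OF \<open>z \<in> ?S\<close>]] .
  qed
qed

end
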